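(* Let $h$ be a hospital and let $\mathrm{Ch}_h$ be the choice function that, given $X'\subseteq X_h$ (with $\mathrm{Ch}_h(\emptyset)=\emptyset$), sorts $X'$ in non-decreasing order of wage (ties broken by a fixed order) as $x^{(1)},\dots,x^{(|X'|)}$, starts with $Y=\emptyset$, for $i=1,\dots,|X'|-1$ adds $x^{(i)}$ to $Y$ if $w_h(Y\cup\{x^{(i)}\})<B_h$, then adds $x^{(|X'|)}$ to $Y$ and returns $Y$. Then for every $X'\subseteq X_h$, $w_h(\mathrm{Ch}_h(X'))<B_h+\overline{w}_h$.
   Context: Hospital $h$ has a finite set $X_h$ of contracts $x$ with wages $x_W$, $0<x_W\le B_h$, where $B_h>0$ is its budget. $w_h(Y)=\sum_{x\in Y}x_W$, $\overline{w}_h=\max_{x\in X_h}x_W$. *)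

theory Defs
  imports Complex_Main "HOL-Library.Product_Lexorder"
begin

definition wsum :: "('c \<Rightarrow> real) \<Rightarrow> 'c set \<Rightarrow> real" where
  "wsum wage Y = (\<Sum>x\<in>Y. wage x)"

fun greedy :: "('c \<Rightarrow> real) \<Rightarrow> real \<Rightarrow> 'c set \<Rightarrow> 'c list \<Rightarrow> 'c set" where
  "greedy wage B Y [] = Y"
| "greedy wage B Y [x] = insert x Y"
| "greedy wage B Y (x # y # xs) =
     (if wsum wage (insert x Y) < B then greedy wage B (insert x Y) (y # xs)
      else greedy wage B Y (y # xs))"

definition Ch :: "('c \<Rightarrow> real) \<Rightarrow> real \<Rightarrow> ('c \<Rightarrow> nat) \<Rightarrow> 'c set \<Rightarrow> 'c set" where
  "Ch wage B rank X' = greedy wage B {} (sorted_key_list_of_set (\<lambda>x. (wage x, rank x)) X')"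

end

theory Submission
  imports Defs
begin

lemma greedy_bound:
  assumes "finite Y" "wsum wage Y < B" "\<forall>x\<in>set xs. 0 \<le> wage x \<and> wage x \<le> M" "0 < M"
  shows "wsum wage (greedy wage B Y xs) < B + M"
  using assms
proof (induction wage B Y xs rule: greedy.induct)
  case (1 wage B Y)
  then show ?case by simp
next
  case (2 wage B Y x)
  have "wsum wage (insert x Y) \<le> wsum wage Y + wage x"
    using 2 unfolding wsum_def
    by (cases "x \<in> Y") (auto simp: insert_absorb)
  then show ?case using 2 by simp
next
  case (3 wage B Y x y xs)
  then show ?case by auto
qed

theorem lemma6:
  fixes Xh :: "'c set" and wage :: "'c \<Rightarrow> real" and B :: real
    and rank :: "'c \<Rightarrow> nat" and X' :: "'c set"
  assumes "finite Xh" and "Xh \<noteq> {}"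
    and "B > 0"
    and "\<forall>x\<in>Xh. 0 < wage x \<and> wage x \<le> B"
    and "inj_on rank Xh"
    and "X' \<subseteq> Xh"
  shows "wsum wage (Ch wage B rank X') < B + Max (wage ` Xh)"
proof -
  have fin: "finite X'" using assms(1,6) finite_subset by blast
  have set: "set (sorted_key_list_of_set (\<lambda>x. (wage x, rank x)) X') = X'"
  proof -
    have fi: "folding_insort_key ((\<le>) :: real \<times> nat \<Rightarrow> _) (<) Xh (\<lambda>x. (wage x, rank x))"
      by unfold_locales (use assms(5) in \<open>auto simp: inj_on_def\<close>)
    have eq: "sorted_key_list_of_set (\<lambda>x. (wage x, rank x)) X' = linorder.sorted_key_list_of_set ((\<le>) :: real \<times> nat \<Rightarrow> _) (\<lambda>x. (wage x, rank x)) X'"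
      by (simp add: sorted_key_list_of_set_def linorder.sorted_key_list_of_set_def[OF linorder_class.linorder_axioms] linorder.insort_key_def[OF linorder_class.linorder_axioms] insort_key_def)
    show ?thesis unfolding eq by (rule folding_insort_key.set_sorted_key_list_of_set[OF fi assms(6) fin])
  qed
  obtain x0 where "x0 \<in> Xh" using assms(2) by blast
  hence M0: "0 < Max (wage ` Xh)"
    using assms(1,4) by (meson Max_ge finite_imageI image_eqI less_le_trans)
  have "\<forall>x\<in>set (sorted_key_list_of_set (\<lambda>x. (wage x, rank x)) X'). 0 \<le> wage x \<and> wage x \<le> Max (wage ` Xh)"
  proof
    fix x assume "x \<in> set (sorted_key_list_of_set (\<lambda>x. (wage x, rank x)) X')"
    hence x: "x \<in> Xh" using set assms(6) by auto
    hence "0 < wage x" using assms(4) by auto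
    moreover have "wage x \<le> Max (wage ` Xh)" using x assms(1) by simp
    ultimately show "0 \<le> wage x \<and> wage x \<le> Max (wage ` Xh)" by simp
  qed
  thus ?thesis unfolding Ch_def
    by (intro greedy_bound) (auto simp: wsum_def assms(3) M0)
qed

end
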